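(* Let $X=X_F\uplus X_H$ be a set of $n\ge1$ clocks, $M\in\mathbb{N}$, and let $v_1,v_2$ be valuations with $v_1\sim_M v_2$. Let $x,y$ be clocks such that $-M\le v_1(x),v_1(y)\le M$. Then $\lfloor v_1(x)\rfloor=\lfloor v_2(x)\rfloor$, $\{v_1(x)\}=0$ iff $\{v_2(x)\}=0$, and $\{v_1(x)\}\le\{v_1(y)\}$ iff $\{v_2(x)\}\le\{v_2(y)\}$.
   Context: $X_F$ are future clocks, $X_H$ history clocks. $\overline{\mathbb{R}}=\mathbb{R}\cup\{\pm\infty\}$ with $(+\infty)+\alpha=+\infty$, $(-\infty)+\beta=-\infty$ for $\beta\ne+\infty$, $-(\pm\infty)=\mp\infty$. A valuation $v:X\cup\{0\}\to\overline{\mathbb{R}}$ has $v(0)=0$, $v(x)\in\mathbb{R}_{\ge0}\cup\{+\infty\}$ for $x\in X_H$, $v(x)\in\mathbb{R}_{\le0}\cup\{-\infty\}$ for $x\in X_F$. For $\alpha\in\mathbb{R}$, $\{\alpha\}=\alpha-\lfloor\alpha\rfloor$. For $K\in\mathbb{N}$ and $\alpha,\beta\in\overline{\mathbb{R}}$, $\alpha\sim_K\beta$ iff for all ${\triangleleft}\in\{<,\le\}$ and all $c\in\{-\infty,+\infty\}$ or $c\in\mathbb{Z}$ with $|c|\le K$: $\alpha\triangleleft c\iff\beta\triangleleft c$. For valuations, $v_1\sim_M v_2$ iff (i) $v_1(x)\sim_{nM}v_2(x)$ for all $x\in X$, and (ii) $v_1(x)-v_1(y)\sim_{(n+1)M}v_2(x)-v_2(y)$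 for all $x,y\in X$, where $n=|X|$. *)

theory Defs
  imports Complex_Main "HOL-Library.Extended_Real"
begin

text \<open>Extended reals are modelled by the library type ereal, whose addition
  satisfies (+inf)+a = +inf and (-inf)+b = -inf for b ~= +inf, and x - y = x + (-y).\<close>

definition sim_K :: "nat \<Rightarrow> ereal \<Rightarrow> ereal \<Rightarrow> bool" where
  "sim_K K a b \<longleftrightarrow>
     (\<forall>c \<in> {-\<infinity>, \<infinity>} \<union> {ereal (real_of_int k) | k. \<bar>k\<bar> \<le> int K}.
        (a < c \<longleftrightarrow> b < c) \<and> (a \<le> c \<longleftrightarrow> b \<le> c))"

text \<open>A valuation on clocks X = XF (future) disjoint-union XH (history);
  the special clock 0 (with v(0)=0) is left implicit.\<close>
definition valuation :: "'c set \<Rightarrow> 'c set \<Rightarrow> ('c \<Rightarrow> ereal) \<Rightarrow> bool" where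
  "valuation XF XH v \<longleftrightarrow> (\<forall>x\<in>XH. 0 \<le> v x) \<and> (\<forall>x\<in>XF. v x \<le> 0)"

definition sim_val :: "'c set \<Rightarrow> nat \<Rightarrow> ('c \<Rightarrow> ereal) \<Rightarrow> ('c \<Rightarrow> ereal) \<Rightarrow> bool" where
  "sim_val X M v1 v2 \<longleftrightarrow>
     (\<forall>x\<in>X. sim_K (card X * M) (v1 x) (v2 x)) \<and>
     (\<forall>x\<in>X. \<forall>y\<in>X. sim_K ((card X + 1) * M) (v1 x - v1 y) (v2 x - v2 y))"

end

theory Submission
  imports Defs
begin

lemma simK_int:
  assumes "sim_K K a b" "\<bar>k\<bar> \<le> int K"
  shows "(a < ereal (real_of_int k) \<longleftrightarrow> b < ereal (real_of_int k)) \<and>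
         (a \<le> ereal (real_of_int k) \<longleftrightarrow> b \<le> ereal (real_of_int k))"
  using assms unfolding sim_K_def by blast

lemma floor_abs_bound:
  fixes r :: real
  assumes "- real K \<le> r" "r \<le> real K"
  shows "\<bar>\<lfloor>r\<rfloor>\<bar> \<le> int K"
proof -
  have "real_of_int \<lfloor>r\<rfloor> \<le> real K" using assms of_int_floor_le[of r] by linarith
  then have a: "\<lfloor>r\<rfloor> \<le> int K" by linarith
  have "- real K < real_of_int \<lfloor>r\<rfloor> + 1" using assms real_of_int_floor_add_one_gt[of r] by linarith
  then have b: "- int K \<le> \<lfloor>r\<rfloor>" by linarith
  show ?thesis using a b by linarith
qed

lemma simK_fin:
  assumes "sim_K K (ereal r) b" "- real K \<le> r" "r \<le> real K"
  shows "\<exists>r2. b = ereal r2 \<and> \<lfloor>r\<rfloor> = \<lfloor>r2\<rfloor> \<and> (frac r = 0 \<longleftrightarrow> frac r2 = 0)"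
proof -
  have a: "b \<le> ereal (real K)" using simK_int[OF assms(1), of "int K"] assms(3) by simp
  have b: "ereal (- real K) \<le> b" proof -
    have "\<not> ereal r < ereal (- real K)" using assms(2) by simp
    then have "\<not> b < ereal (- real K)" using simK_int[OF assms(1), of "- int K"] by simp
    then show ?thesis by (simp only: not_less)
  qed
  obtain r2 where r2: "b = ereal r2" using a b by (cases b) auto
  have fl: "\<lfloor>r\<rfloor> = \<lfloor>r2\<rfloor>"
  proof (cases "r = real K")
    case True
    then have "r2 = real K" using simK_int[OF assms(1), of "int K"] r2 by auto
    then show ?thesis using True by simp
  next
    case False
    have k1: "\<bar>\<lfloor>r\<rfloor>\<bar> \<le> int K"
      using assms(2,3) by (rule floor_abs_bound)
    have "\<lfloor>r\<rfloor> + 1 \<le> int K" using False assms(3) by linarith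
    then have k2: "\<bar>\<lfloor>r\<rfloor> + 1\<bar> \<le> int K" using k1 by linarith
    have "ereal (real_of_int \<lfloor>r\<rfloor>) \<le> ereal r2"
      proof -
      have "\<not> ereal r < ereal (real_of_int \<lfloor>r\<rfloor>)" using of_int_floor_le[of r] by (simp add: not_less)
      then have "\<not> b < ereal (real_of_int \<lfloor>r\<rfloor>)" using simK_int[OF assms(1) k1] by simp
      then show ?thesis using r2 by (simp only: not_less)
    qed
    moreover have "ereal r2 < ereal (real_of_int (\<lfloor>r\<rfloor> + 1))"
      using simK_int[OF assms(1) k2] r2 by simp
    ultimately show ?thesis by simp linarith
  qed
  have k1: "\<bar>\<lfloor>r\<rfloor>\<bar> \<le> int K"
    using assms(2,3) by (rule floor_abs_bound)
  have "r = real_of_int \<lfloor>r\<rfloor> \<longleftrightarrow> r2 = real_of_int \<lfloor>r\<rfloor>"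
  proof -
    have "r = real_of_int \<lfloor>r\<rfloor> \<longleftrightarrow> \<not> ereal r < ereal (real_of_int \<lfloor>r\<rfloor>) \<and> ereal r \<le> ereal (real_of_int \<lfloor>r\<rfloor>)"
      by auto
    also have "\<dots> \<longleftrightarrow> \<not> b < ereal (real_of_int \<lfloor>r\<rfloor>) \<and> b \<le> ereal (real_of_int \<lfloor>r\<rfloor>)"
      using simK_int[OF assms(1) k1] by simp
    also have "\<dots> \<longleftrightarrow> r2 = real_of_int \<lfloor>r\<rfloor>" using r2 by auto
    finally show ?thesis .
  qed
  then have "frac r = 0 \<longleftrightarrow> frac r2 = 0" using fl by (simp add: frac_def)
  then show ?thesis using r2 fl by blast
qed

theorem lemma9:
  fixes XF XH :: "'c set" and M :: nat and v1 v2 :: "'c \<Rightarrow> ereal" and x y :: 'c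
  assumes "finite (XF \<union> XH)" and "XF \<inter> XH = {}" and "card (XF \<union> XH) \<ge> 1"
    and "valuation XF XH v1" and "valuation XF XH v2"
    and "sim_val (XF \<union> XH) M v1 v2"
    and "x \<in> XF \<union> XH" and "y \<in> XF \<union> XH"
    and "- ereal (real M) \<le> v1 x" and "v1 x \<le> ereal (real M)"
    and "- ereal (real M) \<le> v1 y" and "v1 y \<le> ereal (real M)"
  shows "\<exists>r1 r2 s1 s2. v1 x = ereal r1 \<and> v2 x = ereal r2 \<and> v1 y = ereal s1 \<and> v2 y = ereal s2 \<and>
           \<lfloor>r1\<rfloor> = \<lfloor>r2\<rfloor> \<and> (frac r1 = 0 \<longleftrightarrow> frac r2 = 0) \<and>
           (frac r1 \<le> frac s1 \<longleftrightarrow> frac r2 \<le> frac s2)"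
proof -
  let ?n = "card (XF \<union> XH)"
  obtain r1 where r1: "v1 x = ereal r1" using assms(9,10) by (cases "v1 x") auto
  obtain s1 where s1: "v1 y = ereal s1" using assms(11,12) by (cases "v1 y") auto
  have M1: "real M \<le> real (?n * M)" using assms(3)
    by (metis mult_le_mono1 of_nat_le_iff mult_1)
  have M2: "2 * real M \<le> real ((?n + 1) * M)" using assms(3)
    by (metis mult_le_mono1 of_nat_le_iff of_nat_mult of_nat_numeral one_add_one add_le_mono1)
  have sx: "sim_K (?n * M) (ereal r1) (v2 x)" using assms(6,7) unfolding sim_val_def r1[symmetric] by blast
  have sy: "sim_K (?n * M) (ereal s1) (v2 y)" using assms(6,8) unfolding sim_val_def s1[symmetric] by blast
  have sd: "sim_K ((?n + 1) * M) (ereal r1 - ereal s1) (v2 x - v2 y)"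
    using assms(6,7,8) unfolding sim_val_def r1[symmetric] s1[symmetric] by blast
  have r1b: "- real M \<le> r1" "r1 \<le> real M" using assms(9,10) r1 by auto
  have s1b: "- real M \<le> s1" "s1 \<le> real M" using assms(11,12) s1 by auto
  obtain r2 where r2: "v2 x = ereal r2" "\<lfloor>r1\<rfloor> = \<lfloor>r2\<rfloor>" "frac r1 = 0 \<longleftrightarrow> frac r2 = 0"
    using simK_fin[OF sx] r1b M1 by auto
  obtain s2 where s2: "v2 y = ereal s2" "\<lfloor>s1\<rfloor> = \<lfloor>s2\<rfloor>"
    using simK_fin[OF sy] s1b M1 by auto
  define c where "c = \<lfloor>r1\<rfloor> - \<lfloor>s1\<rfloor>"
  have "\<bar>\<lfloor>r1\<rfloor>\<bar> \<le> int M" "\<bar>\<lfloor>s1\<rfloor>\<bar> \<le> int M" using r1b s1b floor_abs_bound by auto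
  then have "\<bar>c\<bar> \<le> int ((?n + 1) * M)" using M2 unfolding c_def by linarith
  from simK_int[OF sd this] r2(1) s2(1)
  have eq: "r1 - s1 \<le> real_of_int c \<longleftrightarrow> r2 - s2 \<le> real_of_int c" by simp
  have "frac r1 \<le> frac s1 \<longleftrightarrow> r1 - s1 \<le> real_of_int c" unfolding c_def frac_def by (simp, linarith)
  moreover have "frac r2 \<le> frac s2 \<longleftrightarrow> r2 - s2 \<le> real_of_int c"
    unfolding c_def frac_def using r2(2) s2(2) by (simp, linarith)
  ultimately show ?thesis using r1 s1 r2 s2 eq by blast
qed

end
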